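(* Let $N\ge 5$ and $2\le d\le N-2$. Consider the conditions (C1)–(C7) below on $\lambda\in\mathbb{R}^{d\times(N+1)}$ (rows $1\le i\le d$, columns $0\le n\le N$): (C1) $\lambda_{i,n}=0$ whenever $i>n$; (C2) $\lambda_{i,n}=N$ whenever $i<n+d-N+1$; (C3) $\sum_{i=1}^d\lambda_{i,n}=dn$ for $0<n<N$; (C4) $\lambda_{i,n}\le\lambda_{i,n+1}$ for $1\le i\le d$, $i\le n<N-d+i-1$; (C5) $\lambda_{i,n}\le\lambda_{i-1,n-1}$ for $1<i\le d$, $i\le n<N-d+i$; (C6) $\lambda_{d,d}\ge0$; (C7) $\lambda_{1,N-d}\le N$. Let $I$ be any one of the inequalities in (C4)–(C7) other than $\lambda_{2,2}\le\lambda_{1,1}$, $\lambda_{1,1}\le\lambda_{1,2}$, $\lambda_{d,N-2}\le\lambda_{d,N-1}$ and $\lambda_{d,N-1}\le\lambda_{d-1,N-2}$. Then there exists $\lambda\in\mathbb{R}^{d\times(N+1)}$ satisfying all of (C1)–(C7) except $I$, and violating $I$.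
   Context: All entries are real; the conditions (C1)–(C7) characterize the polytope $\Lambda_{N,d}$ of eigensteps of equal norm tight frames (squared norms $d$, frame operator $N I_d$). *)

theory Defs
  imports Main "HOL.Real"
begin

text \<open>A matrix lambda in R^{d x (N+1)} is represented as a function
  nat => nat => real; only entries with 1 <= i <= d and 0 <= n <= N matter.\<close>

datatype ineq = C4 nat nat | C5 nat nat | C6 | C7

text \<open>Which inequalities belong to (C4)-(C7) (index ranges, all in nat,
  subtraction-free where possible).\<close>
fun is_ineq :: "nat \<Rightarrow> nat \<Rightarrow> ineq \<Rightarrow> bool" where
  "is_ineq N d (C4 i n) = (1 \<le> i \<and> i \<le> d \<and> i \<le> n \<and> n + 1 < N - d + i)"
| "is_ineq N d (C5 i n) = (1 < i \<and> i \<le> d \<and> i \<le> n \<and> n < N - d + i)"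
| "is_ineq N d C6 = True"
| "is_ineq N d C7 = True"

fun holds :: "nat \<Rightarrow> nat \<Rightarrow> (nat \<Rightarrow> nat \<Rightarrow> real) \<Rightarrow> ineq \<Rightarrow> bool" where
  "holds N d lam (C4 i n) = (lam i n \<le> lam i (n + 1))"
| "holds N d lam (C5 i n) = (lam i n \<le> lam (i - 1) (n - 1))"
| "holds N d lam C6 = (lam d d \<ge> 0)"
| "holds N d lam C7 = (lam 1 (N - d) \<le> real N)"

definition C1 :: "nat \<Rightarrow> nat \<Rightarrow> (nat \<Rightarrow> nat \<Rightarrow> real) \<Rightarrow> bool" where
  "C1 N d lam = (\<forall>i n. 1 \<le> i \<and> i \<le> d \<and> n \<le> N \<and> i > n \<longrightarrow> lam i n = 0)"

definition C2 :: "nat \<Rightarrow> nat \<Rightarrow> (nat \<Rightarrow> nat \<Rightarrow> real) \<Rightarrow> bool" where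
  "C2 N d lam = (\<forall>i n. 1 \<le> i \<and> i \<le> d \<and> n \<le> N \<and> i + N < n + d + 1 \<longrightarrow> lam i n = real N)"

definition C3 :: "nat \<Rightarrow> nat \<Rightarrow> (nat \<Rightarrow> nat \<Rightarrow> real) \<Rightarrow> bool" where
  "C3 N d lam = (\<forall>n. 0 < n \<and> n < N \<longrightarrow> (\<Sum>i=1..d. lam i n) = real d * real n)"

end

theory Submission imports Defs begin

definition base :: "nat \<Rightarrow> nat \<Rightarrow> nat \<Rightarrow> nat \<Rightarrow> real" where
  "base N d i n = (if n < i then 0 else if i + N < n + d + 1 then real N
                   else real d + 1 + real n - 2 * real i)"

lemma gauss_lin: "a \<le> b \<Longrightarrow> (\<Sum>i\<in>{a<..b}. (c::real) - 2 * real i) = real (b - a) * c - (real b * (real b + 1) - real a * (real a + 1))"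
proof (induction b)
  case 0 then show ?case by simp
next
  case (Suc b)
  show ?case
  proof (cases "a = Suc b")
    case True then show ?thesis by simp
  next
    case False
    then have ab: "a \<le> b" using Suc by simp
    have "{a<..Suc b} = insert (Suc b) {a<..b}" using ab by auto
    then have "(\<Sum>i\<in>{a<..Suc b}. c - 2 * real i) = (c - 2 * real (Suc b)) + (\<Sum>i\<in>{a<..b}. c - 2 * real i)"
      by simp
    also have "\<dots> = (c - 2 * real (Suc b)) + (real (b - a) * c - (real b * (real b + 1) - real a * (real a + 1)))"
      using Suc.IH ab by simp
    finally show ?thesis using ab by (simp add: Suc_diff_le of_nat_diff algebra_simps)
  qed
qed

lemma base_sum:
  assumes "0 < n" "n < d + M"
  shows "(\<Sum>i=1..d. base (d+M) d i n) = real d * real n"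
proof -
  define a where "a = n - M"
  define b where "b = min d n"
  have ab: "a \<le> b" "b \<le> d" using assms unfolding a_def b_def by auto
  have split: "{1..d} = {1..a} \<union> {a<..b} \<union> {b<..d}" using ab by auto
  have s1: "(\<Sum>i\<in>{1..a}. base (d+M) d i n) = real a * real (d+M)"
  proof -
    have "(\<Sum>i\<in>{1..a}. base (d+M) d i n) = (\<Sum>i\<in>{1..a}. real (d+M))"
      by (rule sum.cong) (auto simp: base_def a_def)
    then show ?thesis by simp
  qed
  have "(\<Sum>i\<in>{a<..b}. base (d+M) d i n) = (\<Sum>i\<in>{a<..b}. (real d + 1 + real n) - 2 * real i)"
    by (rule sum.cong) (auto simp: base_def a_def b_def)
  also have "\<dots> = real (b - a) * (real d + 1 + real n) - (real b * (real b + 1) - real a * (real a + 1))"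
    using gauss_lin ab by blast
  finally have s2: "(\<Sum>i\<in>{a<..b}. base (d+M) d i n) = real (b - a) * (real d + 1 + real n) - (real b * (real b + 1) - real a * (real a + 1))" .
  have s3: "(\<Sum>i\<in>{b<..d}. base (d+M) d i n) = 0"
    by (rule sum.neutral) (auto simp: base_def b_def)
  have "(\<Sum>i=1..d. base (d+M) d i n) = (\<Sum>i\<in>{1..a}. base (d+M) d i n) + (\<Sum>i\<in>{a<..b}. base (d+M) d i n) + (\<Sum>i\<in>{b<..d}. base (d+M) d i n)"
    unfolding split using ab by (subst sum.union_disjoint, auto, subst sum.union_disjoint, auto)
  also have "\<dots> = real d * real n"
    unfolding s1 s2 s3 using assms unfolding a_def b_def
    by (cases "n \<le> M"; cases "n \<le> d") (auto simp: of_nat_diff algebra_simps min_def)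
  finally show ?thesis .
qed

definition Y :: "(nat \<times> nat \<times> real) list \<Rightarrow> nat \<Rightarrow> nat \<Rightarrow> real" where
  "Y L i n = (\<Sum>(a,b,c)\<leftarrow>L. if i = a \<and> n = b then c else 0)"

lemma Y_simps[simp]: "Y [] i n = 0"
  "Y ((a,b,c)#L) i n = (if i = a \<and> n = b then c else 0) + Y L i n"
  by (simp_all add: Y_def)

lemma Y_sum: "(\<Sum>i=1..d. Y L i n) = (\<Sum>(a,b,c)\<leftarrow>L. if 1 \<le> a \<and> a \<le> d \<and> n = b then c else 0)"
proof (induction L)
  case Nil then show ?case by simp
next
  case (Cons x L)
  obtain a b c where x: "x = (a,b,c)" by (cases x) auto
  have "(\<Sum>i=1..d. Y (x#L) i n) = (\<Sum>i=1..d. (if i = a \<and> n = b then c else 0)) + (\<Sum>i=1..d. Y L i n)"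
    by (simp add: x sum.distrib)
  also have "(\<Sum>i=1..d. (if i = a \<and> n = b then c else 0)) = (if 1 \<le> a \<and> a \<le> d \<and> n = b then c else 0)"
    by (cases "n = b") (simp_all add: sum.delta)
  finally show ?case using Cons by (simp add: x)
qed

lemma Y_zero: "\<forall>(a,b,c)\<in>set L. P a b \<Longrightarrow> \<not> P i n \<Longrightarrow> Y L i n = 0"
  by (induction L) auto

fun cond :: "nat \<Rightarrow> nat \<Rightarrow> (nat \<Rightarrow> nat \<Rightarrow> real) \<Rightarrow> ineq \<Rightarrow> bool" where
  "cond M d y (C4 i n) = (-1 \<le> y i (n+1) - y i n)"
| "cond M d y (C5 i n) = (-1 \<le> y (i-1) (n-1) - y i n)"
| "cond M d y C6 = (-1 \<le> y d d)"
| "cond M d y C7 = (y 1 M \<le> 1)"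

lemma holds_iff:
  assumes "is_ineq (d+M) d J" "2 \<le> M"
  shows "holds (d+M) d (\<lambda>i n. base (d+M) d i n + y i n) J \<longleftrightarrow> cond M d y J"
  using assms by (cases J) (auto simp: base_def)

lemma generic:
  assumes M: "2 \<le> M" and d: "2 \<le> d"
    and supp: "\<forall>(a,b,c)\<in>set L. 1 \<le> a \<and> a \<le> d \<and> a \<le> b \<and> b < M + a"
    and sums: "\<forall>n. (\<Sum>(a,b,c)\<leftarrow>L. if n = b then c else 0) = 0"
    and cnd: "\<forall>J. is_ineq (d+M) d J \<longrightarrow> (cond M d (Y L) J \<longleftrightarrow> J \<noteq> I)"
    and I: "is_ineq (d+M) d I"
  shows "\<exists>lam :: nat \<Rightarrow> nat \<Rightarrow> real.
           C1 (d+M) d lam \<and> C2 (d+M) d lam \<and> C3 (d+M) d lam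
         \<and> (\<forall>J. is_ineq (d+M) d J \<and> J \<noteq> I \<longrightarrow> holds (d+M) d lam J)
         \<and> \<not> holds (d+M) d lam I"
proof (intro exI conjI)
  let ?lam = "\<lambda>i n. base (d+M) d i n + Y L i n"
  show "C1 (d+M) d ?lam"
    unfolding C1_def
  proof (intro allI impI)
    fix i n assume h: "1 \<le> i \<and> i \<le> d \<and> n \<le> d+M \<and> i > n"
    have "Y L i n = 0" by (rule Y_zero[OF supp]) (use h in auto)
    then show "?lam i n = 0" using h by (simp add: base_def)
  qed
  show "C2 (d+M) d ?lam"
    unfolding C2_def
  proof (intro allI impI)
    fix i n assume h: "1 \<le> i \<and> i \<le> d \<and> n \<le> d+M \<and> i + (d+M) < n + d + 1"
    have "Y L i n = 0" by (rule Y_zero[OF supp]) (use h in auto)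
    then show "?lam i n = real (d+M)" using h by (simp add: base_def)
  qed
  show "C3 (d+M) d ?lam"
    unfolding C3_def
  proof (intro allI impI)
    fix n assume h: "0 < n \<and> n < d+M"
    have e: "(\<Sum>(a,b,c)\<leftarrow>L. if 1 \<le> a \<and> a \<le> d \<and> n = b then c else 0) = (\<Sum>(a,b,c)\<leftarrow>L. if n = b then c else 0)"
      using supp by (induction L) auto
    have "(\<Sum>i=1..d. ?lam i n) = (\<Sum>i=1..d. base (d+M) d i n) + (\<Sum>i=1..d. Y L i n)"
      by (simp add: sum.distrib)
    also have "\<dots> = real d * real n"
    proof -
      have y0: "(\<Sum>i=1..d. Y L i n) = 0" unfolding Y_sum e using sums by simp
      show ?thesis using base_sum[of n d M] h y0 by simp
    qed
    finally show "(\<Sum>i=1..d. ?lam i n) = real d * real n" .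
  qed
  show "\<forall>J. is_ineq (d+M) d J \<and> J \<noteq> I \<longrightarrow> holds (d+M) d ?lam J"
    using cnd holds_iff M by blast
  show "\<not> holds (d+M) d ?lam I"
    using cnd holds_iff[OF I M] I by blast
qed


abbreviation "Goal N d I \<equiv> \<exists>lam :: nat \<Rightarrow> nat \<Rightarrow> real.
           C1 N d lam \<and> C2 N d lam \<and> C3 N d lam
         \<and> (\<forall>J. is_ineq N d J \<and> J \<noteq> I \<longrightarrow> holds N d lam J)
         \<and> \<not> holds N d lam I"



lemma caseA: assumes "2 \<le> M" "2 \<le> d" "2 \<le> n" "n + 1 < M + 1"
  shows "Goal (d+M) d (C4 1 n)"
proof (rule generic[where L="[(1,n,1),(1,n+1,-1),(2,n,-1),(2,n+1,1)]"])
  show "\<forall>J. is_ineq (d+M) d J \<longrightarrow> (cond M d (Y [(1,n,1),(1,n+1,-1),(2,n,-1),(2,n+1,1)]) J \<longleftrightarrow> J \<noteq> (C4 1 n))"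
  proof (intro allI)
    fix J show "is_ineq (d+M) d J \<longrightarrow> (cond M d (Y [(1,n,1),(1,n+1,-1),(2,n,-1),(2,n+1,1)]) J \<longleftrightarrow> J \<noteq> (C4 1 n))"
      using assms by (cases J) auto
  qed
qed (use assms in auto)


lemma caseB: assumes "2 \<le> M" "2 \<le> d" "d \<le> n" "n + 3 \<le> M + d"
  shows "Goal (d+M) d (C4 d n)"
proof (rule generic[where L="[(d,n,1),(d,n+1,-1),(d-1,n,-1),(d-1,n+1,1)]"])
  show "\<forall>J. is_ineq (d+M) d J \<longrightarrow> (cond M d (Y [(d,n,1),(d,n+1,-1),(d-1,n,-1),(d-1,n+1,1)]) J \<longleftrightarrow> J \<noteq> (C4 d n))"
  proof (intro allI)
    fix J show "is_ineq (d+M) d J \<longrightarrow> (cond M d (Y [(d,n,1),(d,n+1,-1),(d-1,n,-1),(d-1,n+1,1)]) J \<longleftrightarrow> J \<noteq> (C4 d n))"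
      using assms by (cases J) auto
  qed
qed (use assms in auto)


lemma caseC: assumes "2 \<le> M" "2 \<le> d" "2 \<le> i" "i + 1 \<le> d" "i \<le> n" "n + 1 < M + i"
  shows "Goal (d+M) d (C4 i n)"
proof (rule generic[where L="[(i,n,1),(i,n+1,-1),(i-1,n,-1),(i+1,n+1,1)]"])
  show "\<forall>J. is_ineq (d+M) d J \<longrightarrow> (cond M d (Y [(i,n,1),(i,n+1,-1),(i-1,n,-1),(i+1,n+1,1)]) J \<longleftrightarrow> J \<noteq> (C4 i n))"
  proof (intro allI)
    fix J show "is_ineq (d+M) d J \<longrightarrow> (cond M d (Y [(i,n,1),(i,n+1,-1),(i-1,n,-1),(i+1,n+1,1)]) J \<longleftrightarrow> J \<noteq> (C4 i n))"
      using assms by (cases J) auto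
  qed
qed (use assms in auto)


lemma caseD: assumes "2 \<le> M" "2 \<le> d" "2 \<le> i" "i + 1 \<le> d" "i < n" "n < M + i"
  shows "Goal (d+M) d (C5 i n)"
proof (rule generic[where L="[(i,n,1),(i-1,n-1,-1),(i+1,n,-1),(i,n-1,1)]"])
  show "\<forall>J. is_ineq (d+M) d J \<longrightarrow> (cond M d (Y [(i,n,1),(i-1,n-1,-1),(i+1,n,-1),(i,n-1,1)]) J \<longleftrightarrow> J \<noteq> (C5 i n))"
  proof (intro allI)
    fix J show "is_ineq (d+M) d J \<longrightarrow> (cond M d (Y [(i,n,1),(i-1,n-1,-1),(i+1,n,-1),(i,n-1,1)]) J \<longleftrightarrow> J \<noteq> (C5 i n))"
      using assms by (cases J) auto
  qed
qed (use assms in auto)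


lemma caseE: assumes "2 \<le> M" "2 \<le> d" "3 \<le> i" "i \<le> d" "i \<le> n" "n + 2 \<le> M + i"
  shows "Goal (d+M) d (C5 i n)"
proof (rule generic[where L="[(i,n,1),(i-1,n-1,-1),(i-1,n,-1),(i-2,n-1,1)]"])
  show "\<forall>J. is_ineq (d+M) d J \<longrightarrow> (cond M d (Y [(i,n,1),(i-1,n-1,-1),(i-1,n,-1),(i-2,n-1,1)]) J \<longleftrightarrow> J \<noteq> (C5 i n))"
  proof (intro allI)
    fix J show "is_ineq (d+M) d J \<longrightarrow> (cond M d (Y [(i,n,1),(i-1,n-1,-1),(i-1,n,-1),(i-2,n-1,1)]) J \<longleftrightarrow> J \<noteq> (C5 i n))"
      using assms by (cases J) auto
  qed
qed (use assms in auto)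


lemma caseF: assumes "2 \<le> M" "2 \<le> d" "d = 2" "3 \<le> n" "n \<le> M"
  shows "Goal (d+M) d (C5 2 n)"
proof (rule generic[where L="[(2,n,1),(1,n-1,-1),(1,n,-1),(2,n-1,1)]"])
  show "\<forall>J. is_ineq (d+M) d J \<longrightarrow> (cond M d (Y [(2,n,1),(1,n-1,-1),(1,n,-1),(2,n-1,1)]) J \<longleftrightarrow> J \<noteq> (C5 2 n))"
  proof (intro allI)
    fix J show "is_ineq (d+M) d J \<longrightarrow> (cond M d (Y [(2,n,1),(1,n-1,-1),(1,n,-1),(2,n-1,1)]) J \<longleftrightarrow> J \<noteq> (C5 2 n))"
      using assms by (cases J) auto
  qed
qed (use assms in auto)


lemma caseG: assumes "2 \<le> M"  "3 \<le> M"
  shows "Goal ((e+3)+M) (e+3) (C6)"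
proof (rule generic[where L="[(e+3,e+3,-2),(e+2,e+3,1),(e+1,e+3,1)]"])
  show "\<forall>J. is_ineq ((e+3)+M) (e+3) J \<longrightarrow> (cond M (e+3) (Y [(e+3,e+3,-2),(e+2,e+3,1),(e+1,e+3,1)]) J \<longleftrightarrow> J \<noteq> (C6))"
  proof (intro allI)
    fix J show "is_ineq ((e+3)+M) (e+3) J \<longrightarrow> (cond M (e+3) (Y [(e+3,e+3,-2),(e+2,e+3,1),(e+1,e+3,1)]) J \<longleftrightarrow> J \<noteq> (C6))"
      using assms by (cases J) auto
  qed
qed (use assms in auto)

lemma caseH: assumes "2 \<le> M" "2 \<le> d" "d = 2" "3 \<le> M"
  shows "Goal (d+M) d (C6)"
proof (rule generic[where L="[(2,2,-2),(1,2,2),(2,3,-1),(1,3,1)]"])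
  show "\<forall>J. is_ineq (d+M) d J \<longrightarrow> (cond M d (Y [(2,2,-2),(1,2,2),(2,3,-1),(1,3,1)]) J \<longleftrightarrow> J \<noteq> (C6))"
  proof (intro allI)
    fix J show "is_ineq (d+M) d J \<longrightarrow> (cond M d (Y [(2,2,-2),(1,2,2),(2,3,-1),(1,3,1)]) J \<longleftrightarrow> J \<noteq> (C6))"
      using assms by (cases J) auto
  qed
qed (use assms in auto)

lemma caseK: 
  shows "Goal ((e+3)+2) (e+3) C6"
proof (rule generic[where L="[(e+3,e+3,-2),(e+2,e+3,2),(e+1,e+2,1),(e+2,e+2,-1)]"])
  show "\<forall>J. is_ineq ((e+3)+2) (e+3) J \<longrightarrow> (cond 2 (e+3) (Y [(e+3,e+3,-2),(e+2,e+3,2),(e+1,e+2,1),(e+2,e+2,-1)]) J \<longleftrightarrow> J \<noteq> C6)"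
  proof (intro allI impI)
    fix J assume h: "is_ineq ((e+3)+2) (e+3) J"
    show "cond 2 (e+3) (Y [(e+3,e+3,-2),(e+2,e+3,2),(e+1,e+2,1),(e+2,e+2,-1)]) J \<longleftrightarrow> J \<noteq> C6"
    proof (cases J)
      case (C4 i n) then show ?thesis using h by auto
    next
      case (C5 i n)
      then obtain i0 n0 where "i = Suc i0" "n = Suc n0" using h by (cases i; cases n) auto
      then show ?thesis using h C5 by auto
    qed auto
  qed
qed auto

lemma caseL: assumes "2 \<le> M" "2 \<le> d" "3 \<le> d" "3 \<le> M"
  shows "Goal (d+M) d (C7)"
proof (rule generic[where L="[(1,M,2),(2,M,-1),(3,M,-1)]"])
  show "\<forall>J. is_ineq (d+M) d J \<longrightarrow> (cond M d (Y [(1,M,2),(2,M,-1),(3,M,-1)]) J \<longleftrightarrow> J \<noteq> (C7))"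
  proof (intro allI)
    fix J show "is_ineq (d+M) d J \<longrightarrow> (cond M d (Y [(1,M,2),(2,M,-1),(3,M,-1)]) J \<longleftrightarrow> J \<noteq> (C7))"
      using assms by (cases J) auto
  qed
qed (use assms in auto)


lemma caseP: assumes "2 \<le> M" "2 \<le> d" "d = 2" "3 \<le> M"
  shows "Goal (d+M) d (C7)"
proof (rule generic[where L="[(1,M,2),(2,M,-2),(1,M-1,1),(2,M-1,-1)]"])
  show "\<forall>J. is_ineq (d+M) d J \<longrightarrow> (cond M d (Y [(1,M,2),(2,M,-2),(1,M-1,1),(2,M-1,-1)]) J \<longleftrightarrow> J \<noteq> (C7))"
  proof (intro allI)
    fix J show "is_ineq (d+M) d J \<longrightarrow> (cond M d (Y [(1,M,2),(2,M,-2),(1,M-1,1),(2,M-1,-1)]) J \<longleftrightarrow> J \<noteq> (C7))"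
      using assms by (cases J) auto
  qed
qed (use assms in auto)


lemma caseQ: assumes "2 \<le> M" "2 \<le> d" "3 \<le> d" "M = 2"
  shows "Goal (d+M) d (C7)"
proof (rule generic[where L="[(1,2,2),(2,2,-2),(3,3,-1),(2,3,1)]"])
  show "\<forall>J. is_ineq (d+M) d J \<longrightarrow> (cond M d (Y [(1,2,2),(2,2,-2),(3,3,-1),(2,3,1)]) J \<longleftrightarrow> J \<noteq> (C7))"
  proof (intro allI)
    fix J show "is_ineq (d+M) d J \<longrightarrow> (cond M d (Y [(1,2,2),(2,2,-2),(3,3,-1),(2,3,1)]) J \<longleftrightarrow> J \<noteq> (C7))"
      using assms by (cases J) auto
  qed
qed (use assms in auto)


theorem lemma4p3:
  fixes N d :: nat and I :: ineq
  assumes "N \<ge> 5" and "2 \<le> d" and "d \<le> N - 2"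
    and "is_ineq N d I"
    and "I \<noteq> C5 2 2" and "I \<noteq> C4 1 1"
    and "I \<noteq> C4 d (N - 2)" and "I \<noteq> C5 d (N - 1)"
  shows "\<exists>lam :: nat \<Rightarrow> nat \<Rightarrow> real.
           C1 N d lam \<and> C2 N d lam \<and> C3 N d lam
         \<and> (\<forall>J. is_ineq N d J \<and> J \<noteq> I \<longrightarrow> holds N d lam J)
         \<and> \<not> holds N d lam I"
proof -
  define M where "M = N - d"
  have NM: "N = d + M" and M2: "2 \<le> M" and d2: "2 \<le> d" and N5: "5 \<le> d + M"
    using assms unfolding M_def by auto
  have I: "is_ineq (d+M) d I" and e1: "I \<noteq> C4 d (d + M - 2)" and e2: "I \<noteq> C5 d (d + M - 1)"
    using assms unfolding NM by auto
  have "Goal (d+M) d I"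
  proof (cases I)
    case (C4 i n)
    show ?thesis
    proof (cases "i = 1")
      case True
      then show ?thesis using caseA[OF M2 d2, of n] I C4 assms(6) by auto
    next
      case False
      show ?thesis
      proof (cases "i = d")
        case True
        then show ?thesis using caseB[OF M2 d2, of n] I C4 e1 by auto
      next
        case False
        then show ?thesis using caseC[OF M2 d2, of i n] I C4 \<open>i \<noteq> 1\<close> by auto
      qed
    qed
  next
    case (C5 i n)
    show ?thesis
    proof (cases "i + 1 \<le> d \<and> i < n")
      case True
      then show ?thesis using caseD[OF M2 d2, of i n] I C5 by auto
    next
      case nD: False
      show ?thesis
      proof (cases "3 \<le> i \<and> n + 2 \<le> M + i")
        case True
        then show ?thesis using caseE[OF M2 d2, of i n] I C5 by auto
      next
        case False
        have "i = 2" "d = 2" "3 \<le> n" "n \<le> M"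
          using nD False I C5 e2 assms(5) M2 by auto
        then show ?thesis using caseF[OF M2 d2, of n] C5 by auto
      qed
    qed
  next
    case C6
    show ?thesis
    proof (cases "3 \<le> d \<and> 3 \<le> M")
      case True
      have "Goal (d - 3 + 3 + M) (d - 3 + 3) C6" using caseG[of M "d - 3"] True by simp
      moreover have "d - 3 + 3 = d" using True by simp
      ultimately show ?thesis using C6 by simp
    next
      case False
      show ?thesis
      proof (cases "d = 2")
        case True
        then show ?thesis using caseH[OF M2 d2] N5 C6 by auto
      next
        case False
        then have "M = 2" "d - 3 + 3 = d" using \<open>\<not> (3 \<le> d \<and> 3 \<le> M)\<close> M2 d2 N5 by auto
        moreover have "Goal (d - 3 + 3 + 2) (d - 3 + 3) C6" by (rule caseK)
        ultimately show ?thesis using C6 by simp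
      qed
    qed
  next
    case C7
    show ?thesis
    proof (cases "3 \<le> d \<and> 3 \<le> M")
      case True
      then show ?thesis using caseL[OF M2 d2] C7 by auto
    next
      case False
      show ?thesis
      proof (cases "d = 2")
        case True
        then show ?thesis using caseP[OF M2 d2] N5 C7 by auto
      next
        case False
        then have h: "3 \<le> d" "M = 2" using N5 M2 d2 \<open>\<not> (3 \<le> d \<and> 3 \<le> M)\<close> by auto
        have "Goal (d+M) d C7" by (rule caseQ[OF M2 d2 h])
        then show ?thesis using C7 by simp
      qed
    qed
  qed
  then show ?thesis unfolding NM .
qed

end
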